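(* Let $l_1$ be a sufficiently large perfect square and put $N_1 = 2^{\sqrt{l_1}}$. Define sequences $(N_j)_{j\ge 1}$ and $(l_j)_{j \ge 1}$ recursively by \[ N_{j+1} = \big(\lfloor \sqrt{N_j}\rfloor\big)! \quad\text{and}\quad l_{j+1} = l_j \cdot N_j \qquad (j \ge 1). \] Then \[ \lim_{j\to\infty} \frac{\log N_j}{\sqrt{l_j}} = 0 \quad\text{and}\quad \lim_{j\to\infty} \frac{\log N_j}{l_j^{\beta}} = \infty \ \text{ for every } \beta < 1/2. \] *)

theory Defs
  imports "HOL-Analysis.Analysis" "HOL-Library.Discrete_Functions"
begin

text \<open>Given a perfect square l1 = m^2, the pair (N_j, l_j) for j \<ge> 1,
  indexed by k = j - 1: seqNL l1 0 = (N_1, l_1), seqNL l1 (Suc k) = (N_{k+2}, l_{k+2}).\<close>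
primrec seqNL :: "nat \<Rightarrow> nat \<Rightarrow> nat \<times> nat" where
  "seqNL l1 0 = (2 ^ floor_sqrt l1, l1)"
| "seqNL l1 (Suc k) =
     (let (N, l) = seqNL l1 k in (fact (floor_sqrt N), l * N))"

definition N_seq :: "nat \<Rightarrow> nat \<Rightarrow> nat" where
  "N_seq l1 j = fst (seqNL l1 (j - 1))"

definition l_seq :: "nat \<Rightarrow> nat \<Rightarrow> nat" where
  "l_seq l1 j = snd (seqNL l1 (j - 1))"

end

theory Submission
  imports Defs "HOL-Real_Asymp.Real_Asymp"
begin

definition NN :: "nat \<Rightarrow> nat \<Rightarrow> nat" where "NN l1 k = fst (seqNL l1 k)"
definition LL :: "nat \<Rightarrow> nat \<Rightarrow> nat" where "LL l1 k = snd (seqNL l1 k)"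

lemma NN_0: "NN l1 0 = 2 ^ floor_sqrt l1" by (simp add: NN_def)
lemma LL_0: "LL l1 0 = l1" by (simp add: LL_def)
lemma NN_Suc: "NN l1 (Suc k) = fact (floor_sqrt (NN l1 k))"
  by (simp add: NN_def split_def Let_def)
lemma LL_Suc: "LL l1 (Suc k) = LL l1 k * NN l1 k"
  by (simp add: NN_def LL_def split_def Let_def)

lemma fact_ge_sq: "s \<ge> 5 \<Longrightarrow> (s+1)^2 \<le> (fact s :: nat)"
proof (induction s rule: dec_induct)
  case base then show ?case by (simp add: fact_numeral)
next
  case (step n)
  have nn: "2 \<le> n*n" using mult_le_mono[of 5 n 5 n] step.hyps(1) by linarith
  have a: "(Suc n + 1)^2 \<le> 2 * (n+1)^2"
    using nn by (simp add: power2_eq_square algebra_simps)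
  have "(Suc n + 1)^2 \<le> (n+1) * (n+1)^2"
  proof -
    have "2*(n+1)^2 \<le> (n+1)*(n+1)^2" using step.hyps(1) by (intro mult_right_mono) simp_all
    then show ?thesis using a by (rule order_trans[rotated])
  qed
  also have "\<dots> \<le> (n+1) * fact n" using step.IH by (rule mult_left_mono) simp
  also have "\<dots> = fact (Suc n)" by simp
  finally show ?case .
qed

lemma fact_ge_pow2: "n \<ge> 1 \<Longrightarrow> 2^(n-1) \<le> (fact n :: nat)"
proof (induction n rule: dec_induct)
  case base then show ?case by simp
next
  case (step n)
  have "2^(Suc n - 1) = 2 * 2^(n-1)" using step.hyps(1)
    by (metis Suc_diff_le diff_Suc_1 power_Suc)
  also have "\<dots> \<le> (n+1) * fact n" using step.IH step.hyps(1)
    by (intro mult_mono) auto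
  finally show ?case by simp
qed

lemma NN_pos: "NN l1 k > 0"
  by (cases k) (simp_all add: NN_0 NN_Suc)

lemma LL_pos: "l1 > 0 \<Longrightarrow> LL l1 k > 0"
  by (induction k) (simp_all add: LL_0 LL_Suc NN_pos)

lemma NN_grow: assumes "l1 = m^2" "m \<ge> 5" shows "NN l1 k \<ge> 25 + k"
proof (induction k)
  case 0
  have "(2::nat)^5 \<le> 2^m" using assms(2) by (intro power_increasing) auto
  then show ?case using assms(1) by (simp add: NN_0)
next
  case (Suc k)
  let ?N = "NN l1 k" let ?s = "floor_sqrt ?N"
  have "5 \<le> ?s" using Suc by (intro le_floor_sqrtI) simp
  then have "(?s+1)^2 \<le> fact ?s" by (rule fact_ge_sq)
  moreover have "?N < (Suc ?s)^2" by (rule Suc_floor_sqrt_power2_gt)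
  ultimately show ?case using Suc by (simp add: NN_Suc)
qed

lemma upper_step:
  fixes N :: nat assumes "N \<ge> 1"
  shows "ln (real (fact (floor_sqrt N))) \<le> sqrt (real N) * ln (real N) / 2"
proof -
  let ?s = "floor_sqrt N"
  have s1: "?s \<ge> 1" using assms by (simp add: le_floor_sqrtI)
  have "real (fact ?s) \<le> real (?s ^ ?s)" using fact_le_power[of ?s] by simp
  then have "ln (real (fact ?s)) \<le> ln (real (?s ^ ?s))"
    by (intro ln_mono) auto
  also have "\<dots> = real ?s * ln (real ?s)" using s1 by (simp add: ln_realpow)
  also have "\<dots> \<le> sqrt (real N) * (ln (real N) / 2)"
  proof (intro mult_mono)
    have "real ?s ^ 2 \<le> real N" using floor_sqrt_power2_le[of N] by (metis of_nat_le_iff of_nat_power)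
    then show sq: "real ?s \<le> sqrt (real N)" by (simp add: real_le_rsqrt)
    have "ln (real ?s) \<le> ln (sqrt (real N))" using s1 sq assms by (intro ln_mono) auto
    then show "ln (real ?s) \<le> ln (real N) / 2" using assms by (simp add: ln_sqrt)
    show "0 \<le> sqrt (real N)" by simp
    show "0 \<le> ln (real ?s)" using s1 by simp
  qed
  finally show ?thesis by simp
qed

lemma lower_step:
  fixes N :: nat assumes "N \<ge> 4"
  shows "ln (real (fact (floor_sqrt N))) \<ge> (sqrt (real N) - 2) * ln 2"
proof -
  let ?s = "floor_sqrt N"
  have s1: "?s \<ge> 2" using assms by (simp add: le_floor_sqrtI)
  have "real N < real ((Suc ?s)^2)" using Suc_floor_sqrt_power2_gt[of N] by linarith
  then have "real N < (real ?s + 1)^2" by (simp add: add.commute)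
  then have "sqrt (real N) < real ?s + 1"
    by (metis abs_of_nonneg of_nat_0_le_iff add_nonneg_nonneg zero_le_one real_sqrt_abs real_sqrt_less_mono)
  then have "(sqrt (real N) - 2) * ln 2 \<le> (real ?s - 1) * ln 2" by simp
  also have "\<dots> = ln (real (2^(?s - 1)))" using s1 by (simp add: ln_realpow of_nat_diff)
  also have "\<dots> \<le> ln (real (fact ?s))"
  proof (intro ln_mono)
    have "2^(?s-1) \<le> (fact ?s::nat)" using s1 by (intro fact_ge_pow2) simp
    then show "real (2^(?s-1)) \<le> real (fact ?s)" by (simp only: of_nat_le_iff)
  qed simp
  finally show ?thesis .
qed

lemma part1:
  assumes "l1 > 0"
  shows "(\<lambda>k. ln (real (NN l1 k)) / sqrt (real (LL l1 k))) \<longlonglongrightarrow> 0"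
proof -
  define r where "r k = ln (real (NN l1 k)) / sqrt (real (LL l1 k))" for k
  have r0: "r k \<ge> 0" for k using NN_pos[of l1 k] by (simp add: r_def)
  have rstep: "r (Suc k) \<le> r k / 2" for k
  proof -
    let ?N = "NN l1 k" and ?l = "LL l1 k"
    have N1: "?N \<ge> 1" using NN_pos[of l1 k] by simp
    have lp: "sqrt (real ?l) > 0" using LL_pos[OF assms] by simp
    have Np: "sqrt (real ?N) > 0" using N1 by simp
    have "r (Suc k) = ln (real (fact (floor_sqrt ?N))) / (sqrt (real ?l) * sqrt (real ?N))"
      by (simp add: r_def NN_Suc LL_Suc real_sqrt_mult)
    also have "\<dots> \<le> (sqrt (real ?N) * ln (real ?N) / 2) / (sqrt (real ?l) * sqrt (real ?N))"
      using upper_step[OF N1] lp Np by (intro divide_right_mono) auto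
    also have "\<dots> = r k / 2" using lp Np by (simp add: r_def field_simps)
    finally show ?thesis .
  qed
  have rb: "r k \<le> r 0 * (1/2)^k" for k
  proof (induction k)
    case 0 then show ?case by simp
  next
    case (Suc k) then show ?case using rstep[of k] by simp
  qed
  have "(\<lambda>k. r 0 * (1/2::real)^k) \<longlonglongrightarrow> 0"
    by (intro tendsto_mult_right_zero LIMSEQ_power_zero) auto
  then have "r \<longlonglongrightarrow> 0"
    by (intro tendsto_sandwich[of "\<lambda>_. 0" r sequentially "\<lambda>k. r 0 * (1/2)^k"]) (use r0 rb in auto)
  then show ?thesis by (simp add: r_def[abs_def])
qed

lemma part2:
  assumes "l1 = m^2" "m \<ge> 5" "0 \<le> b" "b < 1/2"
  shows "filterlim (\<lambda>k. ln (real (NN l1 k)) / real (LL l1 k) powr b) at_top sequentially"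
proof -
  have l1p: "l1 > 0" using assms by simp
  define t where "t k = ln (real (NN l1 k)) / real (LL l1 k) powr b" for k
  have tpos: "t k > 0" for k
  proof -
    have "NN l1 k \<ge> 2" using NN_grow[OF assms(1,2), of k] by simp
    then have "ln (real (NN l1 k)) > 0" by simp
    then show ?thesis using LL_pos[OF l1p, of k] by (simp add: t_def)
  qed
  have "eventually (\<lambda>x::real. 2 * x powr b * ln x \<le> (sqrt x - 2) * ln 2) at_top"
    using assms(3,4) by real_asymp
  then obtain X where X: "\<And>x. x \<ge> X \<Longrightarrow> 2 * x powr b * ln x \<le> (sqrt x - 2) * ln 2"
    by (auto simp: eventually_at_top_linorder)
  define K where "K = nat \<lceil>X\<rceil>"
  have tstep: "t (Suc k) \<ge> 2 * t k" if "k \<ge> K" for k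
  proof -
    let ?N = "NN l1 k" and ?l = "LL l1 k"
    have Ng: "?N \<ge> 25 + k" using NN_grow[OF assms(1,2)] by simp
    have "real ?N \<ge> X" using Ng that unfolding K_def by linarith
    then have h: "2 * real ?N powr b * ln (real ?N) \<le> (sqrt (real ?N) - 2) * ln 2" by (rule X)
    have lp: "real ?l powr b > 0" using LL_pos[OF l1p, of k] by simp
    have Np: "real ?N powr b > 0" using Ng by simp
    have "2 * t k = (2 * real ?N powr b * ln (real ?N)) / (real ?l powr b * real ?N powr b)"
      using lp Np by (simp add: t_def field_simps)
    also have "\<dots> \<le> ln (real (fact (floor_sqrt ?N))) / (real ?l powr b * real ?N powr b)"
      using h lower_step[of ?N] Ng lp Np by (intro divide_right_mono) auto
    also have "\<dots> = t (Suc k)"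
      by (simp add: t_def NN_Suc LL_Suc powr_mult)
    finally show ?thesis .
  qed
  have tlin: "t (K + n) \<ge> t K * (real n + 1)" for n
  proof (induction n)
    case 0 then show ?case by simp
  next
    case (Suc n)
    have "t (K + Suc n) \<ge> 2 * t (K + n)" using tstep[of "K+n"] by simp
    moreover have "t K * (real n + 1) \<ge> t K" using tpos[of K] by simp
    ultimately show ?case using Suc by (simp add: algebra_simps)
  qed
  have "filterlim t at_top sequentially"
  proof (rule filterlim_at_top[THEN iffD2], intro allI)
    fix Z :: real
    define n0 where "n0 = nat \<lceil>Z / t K\<rceil>"
    have tK: "t K > 0" by (rule tpos)
    show "eventually (\<lambda>k. Z \<le> t k) sequentially"
    proof (rule eventually_sequentiallyI[of "K + n0"])
      fix k assume k: "k \<ge> K + n0"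
      have "Z \<le> t K * (Z / t K)" using tK by simp
      also have "\<dots> \<le> t K * (real (k - K) + 1)"
        using tK k unfolding n0_def by (intro mult_left_mono) (linarith, simp)
      also have "\<dots> \<le> t (K + (k - K))" by (rule tlin)
      finally show "Z \<le> t k" using k by simp
    qed
  qed
  then show ?thesis by (simp add: t_def[abs_def])
qed

theorem lemma3p1:
  "\<exists>L::nat. \<forall>l1 m::nat. l1 = m\<^sup>2 \<longrightarrow> l1 \<ge> L \<longrightarrow>
     ((\<lambda>j. ln (real (N_seq l1 j)) / sqrt (real (l_seq l1 j))) \<longlonglongrightarrow> 0) \<and>
     (\<forall>\<beta>::real. \<beta> < 1/2 \<longrightarrow>
        filterlim (\<lambda>j. ln (real (N_seq l1 j)) / real (l_seq l1 j) powr \<beta>) at_top sequentially)"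
proof (intro exI[of _ 25] allI impI conjI)
  fix l1 m :: nat assume lm: "l1 = m\<^sup>2" and L: "l1 \<ge> 25"
  have m5: "m \<ge> 5"
  proof (rule ccontr)
    assume "\<not> m \<ge> 5" then have "m \<le> 4" by simp
    then have "m^2 \<le> 4^2" by (rule power_mono) simp
    then show False using lm L by simp
  qed
  have shiftN: "N_seq l1 (Suc j) = NN l1 j" for j by (simp add: N_seq_def NN_def)
  have shiftL: "l_seq l1 (Suc j) = LL l1 j" for j by (simp add: l_seq_def LL_def)
  show "(\<lambda>j. ln (real (N_seq l1 j)) / sqrt (real (l_seq l1 j))) \<longlonglongrightarrow> 0"
    using part1[of l1] L by (subst filterlim_sequentially_Suc[symmetric]) (simp add: shiftN shiftL)
  fix \<beta> :: real assume b: "\<beta> < 1/2"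
  define b' where "b' = max \<beta> 0"
  have p2: "filterlim (\<lambda>k. ln (real (NN l1 k)) / real (LL l1 k) powr b') at_top sequentially"
    using part2[OF lm m5, of b'] b unfolding b'_def by simp
  have "filterlim (\<lambda>k. ln (real (NN l1 k)) / real (LL l1 k) powr \<beta>) at_top sequentially"
  proof (rule filterlim_at_top_mono[OF p2], rule always_eventually, intro allI)
    fix k
    have l1': "real (LL l1 k) \<ge> 1" using LL_pos[of l1 k] L by simp
    have "real (LL l1 k) powr \<beta> \<le> real (LL l1 k) powr b'"
      using l1' unfolding b'_def by (intro powr_mono) auto
    moreover have "ln (real (NN l1 k)) \<ge> 0" using NN_pos[of l1 k] by simp
    moreover have "real (LL l1 k) powr \<beta> > 0" using l1' by simp
    ultimately show "ln (real (NN l1 k)) / real (LL l1 k) powr b'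
                     \<le> ln (real (NN l1 k)) / real (LL l1 k) powr \<beta>"
      by (intro divide_left_mono) auto
  qed
  then show "filterlim (\<lambda>j. ln (real (N_seq l1 j)) / real (l_seq l1 j) powr \<beta>) at_top sequentially"
    by (subst filterlim_sequentially_Suc[symmetric]) (simp add: shiftN shiftL)
qed

end
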